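(* Under the standing assumptions, suppose that $V_R(V_R(R^{\beta_H}))=R^{\beta_H}$ for every wide subgroupoid $H$ of $\mathcal G$. Consider, on the set of wide subgroupoids of $\mathcal G$, the Galois map $\theta(H)=R^{\beta_H}$ and the map $\gamma(H)=\bigoplus_{h\in H}J_h$. Then $\theta$ is injective if and only if $\gamma$ is injective.
   Context: All rings and algebras are associative and unital. A groupoid is a nonempty set $\mathcal G$ with a partially defined associative multiplication in which every $g$ has an inverse $g^{-1}$, a left identity $r(g)=gg^{-1}$ and a right identity $d(g)=g^{-1}g$; $gh$ is defined iff $d(g)=r(h)$; $\mathcal G_0$ is the set of identities. A subgroupoid is a nonempty subset closed under inverses and defined products; it is wide if it contains $\mathcal G_0$. Standing assumptions: $K$ commutative ring, $R$ a $K$-algebra, $\mathcal G$ a finite groupoid, $\beta=(\{E_g\},\{\beta_g\})$ a unital action of $\mathcal G$ on $R$: $E_g=E_{r(g)}$ is an ideal of $R$, unital with identity $1_g$ (so $1_{g^{-1}}=1_{d(g)}$), $\beta_g:E_{g^{-1}}\to E_g$ a $K$-algebra isomorphism, $\beta_e=\mathrm{id}_{E_e}$ for $e\in\mathcal G_0$, $\beta_g\beta_h(x)=\beta_{gh}(x)$ whenever $d(g)=r(h)$, $x\in E_{h^{-1}}$; $R=\bigoplus_{e\in\mathcal G_0}E_e$; and $R$ is a $\beta$-Galois extension of $R^\beta$: there exist $x_i,y_i\in R$ ($1\le i\le m$) with $\sum_i x_i\beta_g(y_i1_{g^{-1}})=1_g$ if $g\in\mathcal G_0$ and $=0$ otherwise.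 For a subgroupoid $H$, $R^{\beta_H}=\{r\in R:\beta_h(r1_{h^{-1}})=r1_h\ \forall h\in H\}$. $V_R(S)=\{r\in R: rs=sr\ \forall s\in S\}$. For $g\in\mathcal G$, $J_g=\{r\in E_g: r\beta_g(x1_{g^{-1}})=xr\ \forall x\in R\}$. *)

theory Defs
  imports Main
begin

text \<open>A groupoid is given by a carrier set G, a (total, but only meaningful where
defined) multiplication and an inversion. d(g) = g^{-1} g, r(g) = g g^{-1};
gh is defined iff d(g) = r(h).\<close>

definition gdom :: "('g \<Rightarrow> 'g \<Rightarrow> 'g) \<Rightarrow> ('g \<Rightarrow> 'g) \<Rightarrow> 'g \<Rightarrow> 'g" where
  "gdom mult ginv g = mult (ginv g) g"

definition gran :: "('g \<Rightarrow> 'g \<Rightarrow> 'g) \<Rightarrow> ('g \<Rightarrow> 'g) \<Rightarrow> 'g \<Rightarrow> 'g" where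
  "gran mult ginv g = mult g (ginv g)"

definition groupoid :: "'g set \<Rightarrow> ('g \<Rightarrow> 'g \<Rightarrow> 'g) \<Rightarrow> ('g \<Rightarrow> 'g) \<Rightarrow> bool" where
  "groupoid G mult ginv \<longleftrightarrow>
     G \<noteq> {} \<and>
     (\<forall>g\<in>G. ginv g \<in> G \<and> ginv (ginv g) = g) \<and>
     (\<forall>g\<in>G. \<forall>h\<in>G. gdom mult ginv g = gran mult ginv h \<longrightarrow>
        mult g h \<in> G \<and> gdom mult ginv (mult g h) = gdom mult ginv h \<and>
        gran mult ginv (mult g h) = gran mult ginv g) \<and>
     (\<forall>g\<in>G. \<forall>h\<in>G. \<forall>l\<in>G. gdom mult ginv g = gran mult ginv h \<and> gdom mult ginv h = gran mult ginv l
        \<longrightarrow> mult (mult g h) l = mult g (mult h l)) \<and>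
     (\<forall>g\<in>G. mult (gran mult ginv g) g = g \<and> mult g (gdom mult ginv g) = g)"

definition gidents :: "'g set \<Rightarrow> ('g \<Rightarrow> 'g \<Rightarrow> 'g) \<Rightarrow> ('g \<Rightarrow> 'g) \<Rightarrow> 'g set" where
  "gidents G mult ginv = gdom mult ginv ` G"

definition subgroupoid :: "'g set \<Rightarrow> ('g \<Rightarrow> 'g \<Rightarrow> 'g) \<Rightarrow> ('g \<Rightarrow> 'g) \<Rightarrow> 'g set \<Rightarrow> bool" where
  "subgroupoid G mult ginv H \<longleftrightarrow>
     H \<noteq> {} \<and> H \<subseteq> G \<and> (\<forall>h\<in>H. ginv h \<in> H) \<and>
     (\<forall>g\<in>H. \<forall>h\<in>H. gdom mult ginv g = gran mult ginv h \<longrightarrow> mult g h \<in> H)"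

definition wide_subgroupoid :: "'g set \<Rightarrow> ('g \<Rightarrow> 'g \<Rightarrow> 'g) \<Rightarrow> ('g \<Rightarrow> 'g) \<Rightarrow> 'g set \<Rightarrow> bool" where
  "wide_subgroupoid G mult ginv H \<longleftrightarrow>
     subgroupoid G mult ginv H \<and> gidents G mult ginv \<subseteq> H"

definition kalgebra :: "('k::comm_ring_1 \<Rightarrow> 'r::ring_1 \<Rightarrow> 'r) \<Rightarrow> bool" where
  "kalgebra smult \<longleftrightarrow>
     (\<forall>a x y. smult a (x + y) = smult a x + smult a y) \<and>
     (\<forall>a b x. smult (a + b) x = smult a x + smult b x) \<and>
     (\<forall>a b x. smult (a * b) x = smult a (smult b x)) \<and>
     (\<forall>x. smult 1 x = x) \<and>
     (\<forall>a x y. smult a (x * y) = smult a x * y \<and> smult a (x * y) = x * smult a y)"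

definition two_sided_ideal :: "'r::ring_1 set \<Rightarrow> bool" where
  "two_sided_ideal I \<longleftrightarrow> 0 \<in> I \<and> (\<forall>x\<in>I. \<forall>y\<in>I. x + y \<in> I) \<and> (\<forall>x\<in>I. - x \<in> I) \<and>
     (\<forall>x\<in>I. \<forall>r. r * x \<in> I \<and> x * r \<in> I)"

definition unital_with :: "'r::ring_1 set \<Rightarrow> 'r \<Rightarrow> bool" where
  "unital_with I u \<longleftrightarrow> u \<in> I \<and> (\<forall>x\<in>I. u * x = x \<and> x * u = x)"

definition kalg_iso :: "('k::comm_ring_1 \<Rightarrow> 'r::ring_1 \<Rightarrow> 'r) \<Rightarrow> ('r \<Rightarrow> 'r) \<Rightarrow> 'r set \<Rightarrow> 'r set \<Rightarrow> bool" where
  "kalg_iso smult f A B \<longleftrightarrow> bij_betw f A B \<and>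
     (\<forall>x\<in>A. \<forall>y\<in>A. f (x + y) = f x + f y \<and> f (x * y) = f x * f y) \<and>
     (\<forall>a. \<forall>x\<in>A. f (smult a x) = smult a (f x))"

definition unital_action ::
  "'g set \<Rightarrow> ('g \<Rightarrow> 'g \<Rightarrow> 'g) \<Rightarrow> ('g \<Rightarrow> 'g) \<Rightarrow> ('k::comm_ring_1 \<Rightarrow> 'r::ring_1 \<Rightarrow> 'r)
    \<Rightarrow> ('g \<Rightarrow> 'r set) \<Rightarrow> ('g \<Rightarrow> 'r) \<Rightarrow> ('g \<Rightarrow> 'r \<Rightarrow> 'r) \<Rightarrow> bool" where
  "unital_action G mult ginv smult E one \<beta> \<longleftrightarrow>
     (\<forall>g\<in>G. E g = E (gran mult ginv g)) \<and>
     (\<forall>g\<in>G. two_sided_ideal (E g) \<and> unital_with (E g) (one g)) \<and>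
     (\<forall>g\<in>G. kalg_iso smult (\<beta> g) (E (ginv g)) (E g)) \<and>
     (\<forall>e\<in>gidents G mult ginv. \<forall>x\<in>E e. \<beta> e x = x) \<and>
     (\<forall>g\<in>G. \<forall>h\<in>G. gdom mult ginv g = gran mult ginv h \<longrightarrow>
        (\<forall>x\<in>E (ginv h). \<beta> g (\<beta> h x) = \<beta> (mult g h) x)) \<and>
     (\<forall>x::'r. \<exists>!f. (\<forall>e\<in>gidents G mult ginv. f e \<in> E e) \<and>
        (\<forall>e. e \<notin> gidents G mult ginv \<longrightarrow> f e = 0) \<and> x = sum f (gidents G mult ginv))"

definition galois_ext ::
  "'g set \<Rightarrow> ('g \<Rightarrow> 'g \<Rightarrow> 'g) \<Rightarrow> ('g \<Rightarrow> 'g) \<Rightarrow> ('g \<Rightarrow> 'r::ring_1) \<Rightarrow> ('g \<Rightarrow> 'r \<Rightarrow> 'r) \<Rightarrow> bool" where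
  "galois_ext G mult ginv one \<beta> \<longleftrightarrow>
     (\<exists>(m::nat) x y. \<forall>g\<in>G.
        (\<Sum>i<m. x i * \<beta> g (y i * one (ginv g))) =
          (if g \<in> gidents G mult ginv then one g else 0))"

definition fixring :: "('g \<Rightarrow> 'g) \<Rightarrow> ('g \<Rightarrow> 'r::ring_1) \<Rightarrow> ('g \<Rightarrow> 'r \<Rightarrow> 'r) \<Rightarrow> 'g set \<Rightarrow> 'r set" where
  "fixring ginv one \<beta> H = {r. \<forall>h\<in>H. \<beta> h (r * one (ginv h)) = r * one h}"

definition centralizer :: "'r::ring_1 set \<Rightarrow> 'r set" where
  "centralizer S = {r. \<forall>s\<in>S. r * s = s * r}"

definition Jset :: "('g \<Rightarrow> 'g) \<Rightarrow> ('g \<Rightarrow> 'r set) \<Rightarrow> ('g \<Rightarrow> 'r::ring_1) \<Rightarrow> ('g \<Rightarrow> 'r \<Rightarrow> 'r) \<Rightarrow> 'g \<Rightarrow> 'r set" where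
  "Jset ginv E one \<beta> g = {r \<in> E g. \<forall>x. r * \<beta> g (x * one (ginv g)) = x * r}"

definition gammaJ :: "('g \<Rightarrow> 'g) \<Rightarrow> ('g \<Rightarrow> 'r set) \<Rightarrow> ('g \<Rightarrow> 'r::ring_1) \<Rightarrow> ('g \<Rightarrow> 'r \<Rightarrow> 'r) \<Rightarrow> 'g set \<Rightarrow> 'r set" where
  "gammaJ ginv E one \<beta> H = {sum f H | f. \<forall>h\<in>H. f h \<in> Jset ginv E one \<beta> h}"

end

theory Submission
  imports Defs
begin

locale ctx =
  fixes G :: "'g set" and mult :: "'g \<Rightarrow> 'g \<Rightarrow> 'g" and ginv :: "'g \<Rightarrow> 'g"
    and smult :: "'k::comm_ring_1 \<Rightarrow> 'r::ring_1 \<Rightarrow> 'r"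
    and E :: "'g \<Rightarrow> 'r set" and one :: "'g \<Rightarrow> 'r" and \<beta> :: "'g \<Rightarrow> 'r \<Rightarrow> 'r"
  assumes grp: "groupoid G mult ginv" and fin: "finite G"
    and act: "unital_action G mult ginv smult E one \<beta>"
begin

abbreviation "dm g \<equiv> gdom mult ginv g"
abbreviation "rn g \<equiv> gran mult ginv g"
abbreviation "G0 \<equiv> gidents G mult ginv"

lemma inv_in: "g \<in> G \<Longrightarrow> ginv g \<in> G" using grp unfolding groupoid_def by blast
lemma inv_inv[simp]: "g \<in> G \<Longrightarrow> ginv (ginv g) = g" using grp unfolding groupoid_def by blast
lemma mult_in: "g \<in> G \<Longrightarrow> h \<in> G \<Longrightarrow> dm g = rn h \<Longrightarrow> mult g h \<in> G"
  using grp unfolding groupoid_def by blast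
lemma dm_mult: "g \<in> G \<Longrightarrow> h \<in> G \<Longrightarrow> dm g = rn h \<Longrightarrow> dm (mult g h) = dm h"
  using grp unfolding groupoid_def by blast
lemma rn_mult: "g \<in> G \<Longrightarrow> h \<in> G \<Longrightarrow> dm g = rn h \<Longrightarrow> rn (mult g h) = rn g"
  using grp unfolding groupoid_def by blast
lemma assoc: "g \<in> G \<Longrightarrow> h \<in> G \<Longrightarrow> l \<in> G \<Longrightarrow> dm g = rn h \<Longrightarrow> dm h = rn l \<Longrightarrow>
   mult (mult g h) l = mult g (mult h l)"
  using grp unfolding groupoid_def by blast
lemma lid: "g \<in> G \<Longrightarrow> mult (rn g) g = g" using grp unfolding groupoid_def by blast
lemma rid: "g \<in> G \<Longrightarrow> mult g (dm g) = g" using grp unfolding groupoid_def by blast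
lemma rn_inv: "g \<in> G \<Longrightarrow> rn (ginv g) = dm g" by (simp add: gran_def gdom_def)
lemma dm_inv: "g \<in> G \<Longrightarrow> dm (ginv g) = rn g" by (simp add: gran_def gdom_def)
lemma dm_in: "g \<in> G \<Longrightarrow> dm g \<in> G"
  by (metis dm_inv gdom_def inv_in mult_in)
lemma rn_in: "g \<in> G \<Longrightarrow> rn g \<in> G"
  by (metis dm_in dm_inv inv_in)
lemma dm_dm: "g \<in> G \<Longrightarrow> dm (dm g) = dm g"
  by (metis dm_inv dm_mult gdom_def inv_in)
lemma rn_dm: "g \<in> G \<Longrightarrow> rn (dm g) = dm g"
  by (metis dm_inv gdom_def inv_in rn_inv rn_mult)
lemma G0_in: "e \<in> G0 \<Longrightarrow> e \<in> G" using dm_in by (auto simp: gidents_def)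
lemma G0_dm: "e \<in> G0 \<Longrightarrow> dm e = e" using dm_dm by (auto simp: gidents_def)
lemma G0_rn: "e \<in> G0 \<Longrightarrow> rn e = e" using rn_dm by (auto simp: gidents_def)
lemma G0_inv: "e \<in> G0 \<Longrightarrow> ginv e = e"
proof -
  assume e: "e \<in> G0"
  hence eG: "e \<in> G" by (rule G0_in)
  have "mult (ginv e) (dm (ginv e)) = ginv e" using rid inv_in eG by blast
  moreover have "dm (ginv e) = e" using dm_inv eG G0_rn e by simp
  moreover have "mult (ginv e) e = dm e" by (simp add: gdom_def)
  ultimately show ?thesis using G0_dm e by simp
qed
lemma dm_G0: "g \<in> G \<Longrightarrow> dm g \<in> G0" by (auto simp: gidents_def)
lemma rn_G0: "g \<in> G \<Longrightarrow> rn g \<in> G0" by (metis dm_G0 dm_inv inv_in)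
lemma inv_G0_iff: "g \<in> G \<Longrightarrow> ginv g \<in> G0 \<longleftrightarrow> g \<in> G0"
  by (metis G0_inv inv_inv)
lemma cancel1: "h \<in> G \<Longrightarrow> k \<in> G \<Longrightarrow> rn k = rn h \<Longrightarrow> mult h (mult (ginv h) k) = k"
proof -
  assume h: "h \<in> G" and k: "k \<in> G" and r: "rn k = rn h"
  have "mult h (mult (ginv h) k) = mult (mult h (ginv h)) k"
    using assoc[of h "ginv h" k] h k r inv_in rn_inv dm_inv by simp
  also have "\<dots> = k" using lid[OF k] r by (simp add: gran_def)
  finally show ?thesis .
qed
lemma cancel2: "h \<in> G \<Longrightarrow> g \<in> G \<Longrightarrow> dm h = rn g \<Longrightarrow> mult (ginv h) (mult h g) = g"
proof -
  assume h: "h \<in> G" and g: "g \<in> G" and r: "dm h = rn g"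
  have "mult (ginv h) (mult h g) = mult (mult (ginv h) h) g"
    using assoc[of "ginv h" h g] h g r inv_in rn_inv dm_inv by simp
  also have "\<dots> = g" using lid g r by (simp add: gdom_def)
  finally show ?thesis .
qed


lemma E_rn: "g \<in> G \<Longrightarrow> E g = E (rn g)" using act unfolding unital_action_def by blast
lemma ideal: "g \<in> G \<Longrightarrow> two_sided_ideal (E g)" using act unfolding unital_action_def by blast
lemma unital: "g \<in> G \<Longrightarrow> unital_with (E g) (one g)" using act unfolding unital_action_def by blast
lemma iso: "g \<in> G \<Longrightarrow> kalg_iso smult (\<beta> g) (E (ginv g)) (E g)" using act unfolding unital_action_def by blast
lemma beta_id: "e \<in> G0 \<Longrightarrow> x \<in> E e \<Longrightarrow> \<beta> e x = x" using act unfolding unital_action_def by blast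
lemma beta_comp: "g \<in> G \<Longrightarrow> h \<in> G \<Longrightarrow> dm g = rn h \<Longrightarrow> x \<in> E (ginv h) \<Longrightarrow> \<beta> g (\<beta> h x) = \<beta> (mult g h) x"
  using act unfolding unital_action_def by blast
lemma decomp: "\<exists>!f. (\<forall>e\<in>G0. f e \<in> E e) \<and> (\<forall>e. e \<notin> G0 \<longrightarrow> f e = 0) \<and> x = sum f G0"
  using act unfolding unital_action_def by blast

lemma finG0: "finite G0" using fin by (simp add: gidents_def)
lemma G0_sub: "G0 \<subseteq> G" using G0_in by blast

lemma zero_in: "g \<in> G \<Longrightarrow> 0 \<in> E g" using ideal unfolding two_sided_ideal_def by blast
lemma add_in: "g \<in> G \<Longrightarrow> a \<in> E g \<Longrightarrow> b \<in> E g \<Longrightarrow> a + b \<in> E g" using ideal unfolding two_sided_ideal_def by blast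
lemma lmul_in: "g \<in> G \<Longrightarrow> a \<in> E g \<Longrightarrow> c * a \<in> E g" using ideal unfolding two_sided_ideal_def by blast
lemma rmul_in: "g \<in> G \<Longrightarrow> a \<in> E g \<Longrightarrow> a * c \<in> E g" using ideal unfolding two_sided_ideal_def by blast
lemma one_in: "g \<in> G \<Longrightarrow> one g \<in> E g" using unital unfolding unital_with_def by blast
lemma one_l: "g \<in> G \<Longrightarrow> a \<in> E g \<Longrightarrow> one g * a = a" using unital unfolding unital_with_def by blast
lemma one_r: "g \<in> G \<Longrightarrow> a \<in> E g \<Longrightarrow> a * one g = a" using unital unfolding unital_with_def by blast
lemma sum_in: assumes g: "g \<in> G" shows "finite A \<Longrightarrow> (\<And>i. i \<in> A \<Longrightarrow> f i \<in> E g) \<Longrightarrow> sum f A \<in> E g"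
  by (induction A rule: finite_induct) (auto intro: add_in zero_in g)
lemma one_central: "g \<in> G \<Longrightarrow> one g * x = x * one g"
proof -
  assume g: "g \<in> G"
  have "one g * (x * one g) = x * one g" by (rule one_l[OF g lmul_in[OF g one_in[OF g]]])
  moreover have "(one g * x) * one g = one g * x" by (rule one_r[OF g rmul_in[OF g one_in[OF g]]])
  ultimately show ?thesis by (simp add: mult.assoc)
qed
lemma one_idem: "g \<in> G \<Longrightarrow> one g * one g = one g" using one_l one_in by blast
lemma one_rn: "g \<in> G \<Longrightarrow> one (rn g) = one g"
proof -
  assume g: "g \<in> G"
  have r: "rn g \<in> G" using rn_in g .
  have "one (rn g) * one g = one g" using one_l[OF r] one_in[OF g] E_rn[OF g] by simp
  moreover have "one (rn g) * one g = one (rn g)" using one_r[OF g] one_in[OF r] E_rn[OF g] by simp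
  ultimately show ?thesis by simp
qed
lemma one_inv: "g \<in> G \<Longrightarrow> one (ginv g) = one (dm g)"
  by (metis inv_in one_rn rn_inv)

lemma disj0: "e1 \<in> G0 \<Longrightarrow> e2 \<in> G0 \<Longrightarrow> e1 \<noteq> e2 \<Longrightarrow> z \<in> E e1 \<Longrightarrow> z \<in> E e2 \<Longrightarrow> z = 0"
proof -
  assume e1: "e1 \<in> G0" and e2: "e2 \<in> G0" and ne: "e1 \<noteq> e2" and z1: "z \<in> E e1" and z2: "z \<in> E e2"
  define f1 where "f1 = (\<lambda>e. if e = e1 then z else 0)"
  define f2 where "f2 = (\<lambda>e. if e = e2 then z else 0)"
  have P1: "(\<forall>e\<in>G0. f1 e \<in> E e) \<and> (\<forall>e. e \<notin> G0 \<longrightarrow> f1 e = 0) \<and> z = sum f1 G0"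
    using z1 e1 finG0 zero_in G0_in unfolding f1_def by (auto simp: sum.delta)
  have P2: "(\<forall>e\<in>G0. f2 e \<in> E e) \<and> (\<forall>e. e \<notin> G0 \<longrightarrow> f2 e = 0) \<and> z = sum f2 G0"
    using z2 e2 finG0 zero_in G0_in unfolding f2_def by (auto simp: sum.delta)
  have "f1 = f2" using decomp[of z] P1 P2 by blast
  hence "f1 e1 = f2 e1" by simp
  thus ?thesis using ne unfolding f1_def f2_def by simp
qed
lemma orth: "g \<in> G \<Longrightarrow> k \<in> G \<Longrightarrow> rn g \<noteq> rn k \<Longrightarrow> a \<in> E g \<Longrightarrow> b \<in> E k \<Longrightarrow> a * b = 0"
proof -
  assume g: "g \<in> G" and k: "k \<in> G" and ne: "rn g \<noteq> rn k" and a: "a \<in> E g" and b: "b \<in> E k"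
  have "a * b \<in> E (rn g)" using rmul_in[OF g a] E_rn[OF g] by simp
  moreover have "a * b \<in> E (rn k)" using lmul_in[OF k b] E_rn[OF k] by simp
  ultimately show ?thesis using disj0 rn_G0 g k ne by blast
qed
lemma one_one: "g \<in> G \<Longrightarrow> k \<in> G \<Longrightarrow> one g * one k = (if rn g = rn k then one k else 0)"
  by (metis E_rn one_in one_l one_rn orth)
lemma sum_ones: "(\<Sum>e\<in>G0. x * one e) = x"
proof -
  obtain f where f: "\<forall>e\<in>G0. f e \<in> E e" "x = sum f G0" using decomp[of x] by blast
  have "x * one e = f e" if e: "e \<in> G0" for e
  proof -
    have eG: "e \<in> G" using G0_in e .
    have "x * one e = (\<Sum>e'\<in>G0. f e' * one e)" using f(2) by (simp add: sum_distrib_right)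
    also have "\<dots> = (\<Sum>e'\<in>G0. if e' = e then f e else 0)"
    proof (rule sum.cong[OF refl])
      fix e' assume e': "e' \<in> G0"
      show "f e' * one e = (if e' = e then f e else 0)"
      proof (cases "e' = e")
        case True thus ?thesis using one_r[OF eG] f(1) e by simp
      next
        case False
        have "rn e' \<noteq> rn e" using False G0_rn e e' by simp
        thus ?thesis using orth[OF G0_in[OF e'] eG _ f(1)[rule_format, OF e'] one_in[OF eG]] False by simp
      qed
    qed
    also have "\<dots> = f e" using e finG0 by (simp add: sum.delta')
    finally show ?thesis .
  qed
  hence "(\<Sum>e\<in>G0. x * one e) = sum f G0" by (rule sum.cong[OF refl])
  thus ?thesis using f(2) by simp
qed
lemma sum_ones1: "(\<Sum>e\<in>G0. one e) = (1::'r)" using sum_ones[of 1] by simp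


lemma beta_in: "g \<in> G \<Longrightarrow> x \<in> E (ginv g) \<Longrightarrow> \<beta> g x \<in> E g"
  using iso unfolding kalg_iso_def bij_betw_def by blast
lemma beta_add: "g \<in> G \<Longrightarrow> x \<in> E (ginv g) \<Longrightarrow> y \<in> E (ginv g) \<Longrightarrow> \<beta> g (x + y) = \<beta> g x + \<beta> g y"
  using iso unfolding kalg_iso_def by blast
lemma beta_mul: "g \<in> G \<Longrightarrow> x \<in> E (ginv g) \<Longrightarrow> y \<in> E (ginv g) \<Longrightarrow> \<beta> g (x * y) = \<beta> g x * \<beta> g y"
  using iso unfolding kalg_iso_def by blast
lemma beta_inj: "g \<in> G \<Longrightarrow> x \<in> E (ginv g) \<Longrightarrow> y \<in> E (ginv g) \<Longrightarrow> \<beta> g x = \<beta> g y \<Longrightarrow> x = y"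
  using iso unfolding kalg_iso_def bij_betw_def inj_on_def by blast
lemma beta_surj: "g \<in> G \<Longrightarrow> y \<in> E g \<Longrightarrow> \<exists>x\<in>E (ginv g). \<beta> g x = y"
proof -
  assume g: "g \<in> G" and y: "y \<in> E g"
  have "\<beta> g ` E (ginv g) = E g" using iso[OF g] unfolding kalg_iso_def bij_betw_def by blast
  thus ?thesis using y by (metis imageE)
qed
lemma beta_0: "g \<in> G \<Longrightarrow> \<beta> g 0 = 0"
proof -
  assume g: "g \<in> G"
  have z: "0 \<in> E (ginv g)" using zero_in inv_in g by blast
  have "\<beta> g (0 + 0) = \<beta> g 0 + \<beta> g 0" using beta_add[OF g z z] .
  thus ?thesis by simp
qed
lemma beta_one: "g \<in> G \<Longrightarrow> \<beta> g (one (ginv g)) = one g"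
proof -
  assume g: "g \<in> G"
  have gi: "ginv g \<in> G" using inv_in g .
  have b: "\<beta> g (one (ginv g)) \<in> E g" using beta_in[OF g one_in[OF gi]] .
  obtain x where x: "x \<in> E (ginv g)" "\<beta> g x = one g" using beta_surj[OF g one_in[OF g]] by blast
  have "\<beta> g (one (ginv g)) * one g = \<beta> g (one (ginv g) * x)" using beta_mul[OF g one_in[OF gi] x(1)] x(2) by simp
  also have "\<dots> = one g" using one_l[OF gi x(1)] x(2) by simp
  finally show ?thesis using one_r[OF g b] by simp
qed
lemma beta_sum: "g \<in> G \<Longrightarrow> finite A \<Longrightarrow> (\<And>i. i \<in> A \<Longrightarrow> f i \<in> E (ginv g)) \<Longrightarrow> \<beta> g (sum f A) = (\<Sum>i\<in>A. \<beta> g (f i))"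
proof -
  assume g: "g \<in> G"
  show "finite A \<Longrightarrow> (\<And>i. i \<in> A \<Longrightarrow> f i \<in> E (ginv g)) \<Longrightarrow> \<beta> g (sum f A) = (\<Sum>i\<in>A. \<beta> g (f i))"
  proof (induction A rule: finite_induct)
    case empty thus ?case using beta_0[OF g] by simp
  next
    case (insert a A)
    have "sum f A \<in> E (ginv g)" using sum_in[OF inv_in[OF g]] insert by auto
    thus ?case using insert beta_add[OF g] by simp
  qed
qed
lemma beta_inv: "g \<in> G \<Longrightarrow> x \<in> E (ginv g) \<Longrightarrow> \<beta> (ginv g) (\<beta> g x) = x"
proof -
  assume g: "g \<in> G" and x: "x \<in> E (ginv g)"
  have gi: "ginv g \<in> G" using inv_in g .
  have "\<beta> (ginv g) (\<beta> g x) = \<beta> (mult (ginv g) g) x"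
    using beta_comp[OF gi g _ x] dm_inv[OF g] by simp
  also have "mult (ginv g) g = dm g" by (simp add: gdom_def)
  also have "\<beta> (dm g) x = x"
  proof (rule beta_id)
    show "dm g \<in> G0" using dm_G0 g .
    show "x \<in> E (dm g)" using x E_rn[OF gi] rn_inv[OF g] by simp
  qed
  finally show ?thesis .
qed
lemma mone_in: "g \<in> G \<Longrightarrow> x * one g \<in> E g" using lmul_in one_in by blast
lemma one_mul_one: "g \<in> G \<Longrightarrow> (a * one g) * (b * one g) = a * b * one g"
  by (metis mult.assoc one_central one_idem)
lemma beta_mul1: "g \<in> G \<Longrightarrow> \<beta> g (a * b * one (ginv g)) = \<beta> g (a * one (ginv g)) * \<beta> g (b * one (ginv g))"
proof -
  assume g: "g \<in> G"
  have gi: "ginv g \<in> G" using inv_in g .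
  show ?thesis using beta_mul[OF g mone_in[OF gi] mone_in[OF gi]] one_mul_one[OF gi] by simp
qed


definition tr :: "'g set \<Rightarrow> 'r \<Rightarrow> 'r" where
  "tr H a = (\<Sum>h\<in>H. \<beta> h (a * one (ginv h)))"

lemma T_in: "h \<in> G \<Longrightarrow> \<beta> h (a * one (ginv h)) \<in> E h"
  using beta_in mone_in inv_in by blast

lemma tr_one: assumes k: "k \<in> G" and H: "H \<subseteq> G"
  shows "tr H a * one k = (\<Sum>h\<in>{h\<in>H. rn h = rn k}. \<beta> h (a * one (ginv h)))"
proof -
  have finH: "finite H" using H fin finite_subset by blast
  have "tr H a * one k = (\<Sum>h\<in>H. \<beta> h (a * one (ginv h)) * one k)"
    unfolding tr_def by (simp add: sum_distrib_right)
  also have "\<dots> = (\<Sum>h\<in>H. if rn h = rn k then \<beta> h (a * one (ginv h)) else 0)"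
  proof (rule sum.cong[OF refl])
    fix h assume "h \<in> H"
    hence h: "h \<in> G" using H by blast
    show "\<beta> h (a * one (ginv h)) * one k = (if rn h = rn k then \<beta> h (a * one (ginv h)) else 0)"
    proof (cases "rn h = rn k")
      case True
      have "\<beta> h (a * one (ginv h)) \<in> E k" using T_in[OF h] E_rn[OF h] E_rn[OF k] True by simp
      thus ?thesis using one_r[OF k] True by simp
    next
      case False thus ?thesis using orth[OF h k False T_in[OF h] one_in[OF k]] by simp
    qed
  qed
  also have "\<dots> = (\<Sum>h\<in>{h\<in>H. rn h = rn k}. \<beta> h (a * one (ginv h)))"
    using finH by (simp add: sum.inter_filter)
  finally show ?thesis .
qed

lemma tr_fix: assumes H: "subgroupoid G mult ginv H" shows "tr H a \<in> fixring ginv one \<beta> H"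
  unfolding fixring_def
proof (intro CollectI ballI)
  fix k assume kH: "k \<in> H"
  have HG: "H \<subseteq> G" and Hinv: "\<And>h. h \<in> H \<Longrightarrow> ginv h \<in> H"
    and Hmul: "\<And>g h. g \<in> H \<Longrightarrow> h \<in> H \<Longrightarrow> dm g = rn h \<Longrightarrow> mult g h \<in> H"
    using H unfolding subgroupoid_def by blast+
  have finH: "finite H" using HG fin finite_subset by blast
  have k: "k \<in> G" using kH HG by blast
  have ki: "ginv k \<in> G" using inv_in k .
  define T where "T h = \<beta> h (a * one (ginv h))" for h
  define A where "A = {h\<in>H. rn h = dm k}"
  define B where "B = {h\<in>H. rn h = rn k}"
  have "tr H a * one (ginv k) = sum T A"
    using tr_one[OF ki HG] rn_inv[OF k] unfolding T_def A_def by simp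
  hence "\<beta> k (tr H a * one (ginv k)) = (\<Sum>h\<in>A. \<beta> k (T h))"
  proof -
    assume eq: "tr H a * one (ginv k) = sum T A"
    have "\<beta> k (sum T A) = (\<Sum>h\<in>A. \<beta> k (T h))"
    proof (rule beta_sum[OF k])
      show "finite A" using finH unfolding A_def by simp
      fix h assume "h \<in> A"
      hence h: "h \<in> G" "rn h = dm k" using HG unfolding A_def by auto
      show "T h \<in> E (ginv k)" using T_in[OF h(1)] E_rn[OF h(1)] E_rn[OF ki] rn_inv[OF k] h(2)
        unfolding T_def by simp
    qed
    thus ?thesis using eq by simp
  qed
  also have "\<dots> = (\<Sum>h\<in>A. T (mult k h))"
  proof (rule sum.cong[OF refl])
    fix h assume "h \<in> A"
    hence h: "h \<in> G" "rn h = dm k" using HG unfolding A_def by auto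
    have "\<beta> k (T h) = \<beta> (mult k h) (a * one (ginv h))"
      unfolding T_def using beta_comp[OF k h(1) h(2)[symmetric] mone_in[OF inv_in[OF h(1)]]] .
    moreover have "one (ginv h) = one (ginv (mult k h))"
      using one_inv[OF h(1)] one_inv[OF mult_in[OF k h(1)]] dm_mult[OF k h(1)] h(2) by simp
    ultimately show "\<beta> k (T h) = T (mult k h)" unfolding T_def by simp
  qed
  also have "\<dots> = sum T B"
  proof (rule sum.reindex_bij_witness[where i = "\<lambda>l. mult (ginv k) l" and j = "\<lambda>h. mult k h"])
    fix h assume "h \<in> A"
    hence hH: "h \<in> H" and h: "h \<in> G" "rn h = dm k" using HG unfolding A_def by auto
    show "mult (ginv k) (mult k h) = h" using cancel2[OF k h(1)] h(2) by simp
    show "mult k h \<in> B" unfolding B_def using Hmul[OF kH hH] h(2) rn_mult[OF k h(1)] by simp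
    show "T (mult k h) = T (mult k h)" by simp
  next
    fix l assume "l \<in> B"
    hence lH: "l \<in> H" and l: "l \<in> G" "rn l = rn k" using HG unfolding B_def by auto
    show "mult k (mult (ginv k) l) = l" using cancel1[OF k l(1) l(2)] .
    show "mult (ginv k) l \<in> A" unfolding A_def
      using Hmul[OF Hinv[OF kH] lH] l(2) dm_inv[OF k] rn_mult[OF ki l(1)] rn_inv[OF k] by simp
  qed
  also have "\<dots> = tr H a * one k" using tr_one[OF k HG] unfolding T_def B_def by simp
  finally show "\<beta> k (tr H a * one (ginv k)) = tr H a * one k" .
qed


end

locale gal = ctx G mult ginv smult E one \<beta>
  for G :: "'g set" and mult :: "'g \<Rightarrow> 'g \<Rightarrow> 'g" and ginv :: "'g \<Rightarrow> 'g"
    and smult :: "'k::comm_ring_1 \<Rightarrow> 'r::ring_1 \<Rightarrow> 'r"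
    and E :: "'g \<Rightarrow> 'r set" and one :: "'g \<Rightarrow> 'r" and \<beta> :: "'g \<Rightarrow> 'r \<Rightarrow> 'r" +
  fixes m :: nat and x :: "nat \<Rightarrow> 'r" and y :: "nat \<Rightarrow> 'r"
  assumes coord: "\<And>g. g \<in> G \<Longrightarrow> (\<Sum>i<m. x i * \<beta> g (y i * one (ginv g))) = (if g \<in> G0 then one g else 0)"
begin

lemma subG: "subgroupoid G mult ginv G"
  using grp inv_in mult_in unfolding subgroupoid_def groupoid_def by blast

lemma sum_G0: "(\<Sum>g\<in>G. if g \<in> G0 then f g else 0) = (\<Sum>g\<in>G0. f g)"
proof -
  have "(\<Sum>g\<in>G. if g \<in> G0 then f g else 0) = sum f (G \<inter> G0)" using fin by (simp add: sum.inter_restrict)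
  also have "G \<inter> G0 = G0" using G0_sub by blast
  finally show ?thesis .
qed

lemma id1: "(\<Sum>j<m. x j * tr G (y j * r)) = r"
proof -
  have "(\<Sum>j<m. x j * tr G (y j * r)) = (\<Sum>j<m. \<Sum>g\<in>G. x j * \<beta> g (y j * one (ginv g)) * \<beta> g (r * one (ginv g)))"
    unfolding tr_def sum_distrib_left
  proof (intro sum.cong refl)
    fix j g assume "g \<in> G"
    thus "x j * \<beta> g (y j * r * one (ginv g)) = x j * \<beta> g (y j * one (ginv g)) * \<beta> g (r * one (ginv g))"
      using beta_mul1[of g "y j" r] by (simp add: mult.assoc)
  qed
  also have "\<dots> = (\<Sum>g\<in>G. (\<Sum>j<m. x j * \<beta> g (y j * one (ginv g))) * \<beta> g (r * one (ginv g)))"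
    by (simp add: sum.swap[of _ G] sum_distrib_right)
  also have "\<dots> = (\<Sum>g\<in>G. if g \<in> G0 then one g * \<beta> g (r * one (ginv g)) else 0)"
    by (rule sum.cong[OF refl]) (simp add: coord)
  also have "\<dots> = (\<Sum>g\<in>G0. one g * \<beta> g (r * one (ginv g)))" by (rule sum_G0)
  also have "\<dots> = (\<Sum>g\<in>G0. r * one g)"
  proof (rule sum.cong[OF refl])
    fix g assume g: "g \<in> G0"
    have gG: "g \<in> G" using G0_in g .
    show "one g * \<beta> g (r * one (ginv g)) = r * one g"
      using G0_inv[OF g] beta_id[OF g mone_in[OF gG]] one_l[OF gG mone_in[OF gG]] by simp
  qed
  also have "\<dots> = r" by (rule sum_ones)
  finally show ?thesis .
qed

lemma lemC: assumes g: "g \<in> G"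
  shows "(\<Sum>j<m. \<beta> g (x j * one (ginv g)) * y j) * one g = (if g \<in> G0 then one g else 0)"
proof -
  define g' where "g' = ginv g"
  have g': "g' \<in> G" "ginv g' = g" using inv_in g g unfolding g'_def by auto
  define S where "S = (\<Sum>j<m. \<beta> g (x j * one g') * (y j * one g))"
  have SE: "S \<in> E g" unfolding S_def
    by (rule sum_in[OF g]) (auto intro: rmul_in[OF g] T_in[OF g] simp: g'_def)
  have S_eq: "(\<Sum>j<m. \<beta> g (x j * one (ginv g)) * y j) * one g = S"
    unfolding S_def g'_def by (simp add: sum_distrib_right mult.assoc)
  have Eg': "E (ginv g') = E g" using g' by simp
  have "\<beta> g' S = (\<Sum>j<m. \<beta> g' (\<beta> g (x j * one g') * (y j * one g)))"
    unfolding S_def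
    by (rule beta_sum[OF g'(1)]) (auto intro: rmul_in[OF g] T_in[OF g] simp: g'_def g)
  also have "\<dots> = (\<Sum>j<m. x j * \<beta> g' (y j * one (ginv g')))"
  proof (rule sum.cong[OF refl])
    fix j
    have a: "\<beta> g (x j * one g') \<in> E (ginv g')" using T_in[OF g] Eg' unfolding g'_def by simp
    have b: "y j * one g \<in> E (ginv g')" using mone_in[OF g] Eg' by simp
    have "\<beta> g' (\<beta> g (x j * one g') * (y j * one g)) = \<beta> g' (\<beta> g (x j * one g')) * \<beta> g' (y j * one g)"
      using beta_mul[OF g'(1) a b] .
    also have "\<beta> g' (\<beta> g (x j * one g')) = x j * one g'"
      using beta_inv[OF g, of "x j * one g'"] mone_in[OF g'(1), of "x j"] unfolding g'_def by simp
    also have "x j * one g' * \<beta> g' (y j * one g) = x j * \<beta> g' (y j * one g)"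
      using one_l[OF g'(1) beta_in[OF g'(1) b]] by (simp add: mult.assoc)
    finally show "\<beta> g' (\<beta> g (x j * one g') * (y j * one g)) = x j * \<beta> g' (y j * one (ginv g'))"
      using g' by simp
  qed
  also have "\<dots> = (if g' \<in> G0 then one g' else 0)" using coord[OF g'(1)] .
  finally have bS: "\<beta> g' S = (if g' \<in> G0 then one g' else 0)" .
  have SE': "S \<in> E (ginv g')" using SE Eg' by simp
  show ?thesis
  proof (cases "g \<in> G0")
    case True
    have gg: "g' = g" using G0_inv[OF True] unfolding g'_def .
    have "\<beta> g' S = \<beta> g' (one g)" using bS True gg beta_one[OF g'(1)] g' by simp
    hence "S = one g" using beta_inj[OF g'(1) SE'] one_in[OF g] Eg' by simp
    thus ?thesis using S_eq True by simp
  next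
    case False
    have "g' \<notin> G0" using False inv_G0_iff[OF g] unfolding g'_def by simp
    hence "\<beta> g' S = \<beta> g' 0" using bS beta_0[OF g'(1)] by simp
    hence "S = 0" using beta_inj[OF g'(1) SE'] zero_in[OF g] Eg' by simp
    thus ?thesis using S_eq False by simp
  qed
qed

lemma id2: "(\<Sum>j<m. tr G (a * x j) * y j) = a"
proof -
  have "(\<Sum>j<m. tr G (a * x j) * y j) = (\<Sum>j<m. \<Sum>g\<in>G. \<beta> g (a * one (ginv g)) * \<beta> g (x j * one (ginv g)) * y j)"
    unfolding tr_def by (simp add: sum_distrib_right beta_mul1)
  also have "\<dots> = (\<Sum>g\<in>G. \<beta> g (a * one (ginv g)) * (\<Sum>j<m. \<beta> g (x j * one (ginv g)) * y j))"
    by (simp add: sum.swap[of _ G] sum_distrib_left mult.assoc)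
  also have "\<dots> = (\<Sum>g\<in>G. if g \<in> G0 then \<beta> g (a * one (ginv g)) * one g else 0)"
  proof (rule sum.cong[OF refl])
    fix g assume g: "g \<in> G"
    let ?b = "\<beta> g (a * one (ginv g))"
    let ?S = "\<Sum>j<m. \<beta> g (x j * one (ginv g)) * y j"
    have "?b * ?S = ?b * one g * ?S" using one_r[OF g T_in[OF g]] by simp
    also have "\<dots> = ?b * (?S * one g)" by (simp add: mult.assoc one_central[OF g])
    also have "\<dots> = (if g \<in> G0 then ?b * one g else 0)" using lemC[OF g] by simp
    finally show "?b * ?S = (if g \<in> G0 then ?b * one g else 0)" .
  qed
  also have "\<dots> = (\<Sum>g\<in>G0. \<beta> g (a * one (ginv g)) * one g)" by (rule sum_G0)
  also have "\<dots> = (\<Sum>g\<in>G0. a * one g)"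
  proof (rule sum.cong[OF refl])
    fix g assume g: "g \<in> G0"
    have gG: "g \<in> G" using G0_in g .
    show "\<beta> g (a * one (ginv g)) * one g = a * one g"
      using G0_inv[OF g] beta_id[OF g mone_in[OF gG]] one_r[OF gG mone_in[OF gG]] by simp
  qed
  also have "\<dots> = a" by (rule sum_ones)
  finally show ?thesis .
qed

lemma sumH: assumes H: "wide_subgroupoid G mult ginv H" shows "(\<Sum>j<m. x j * tr H (y j)) = 1"
proof -
  have HG: "H \<subseteq> G" and G0H: "G0 \<subseteq> H" using H unfolding wide_subgroupoid_def subgroupoid_def by blast+
  have finH: "finite H" using HG fin finite_subset by blast
  have "(\<Sum>j<m. x j * tr H (y j)) = (\<Sum>h\<in>H. \<Sum>j<m. x j * \<beta> h (y j * one (ginv h)))"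
    unfolding tr_def by (simp add: sum_distrib_left sum.swap[of _ H])
  also have "\<dots> = (\<Sum>h\<in>H. if h \<in> G0 then one h else 0)"
    by (rule sum.cong[OF refl]) (use HG coord in blast)
  also have "\<dots> = sum one (H \<inter> G0)" using finH by (simp add: sum.inter_restrict)
  also have "H \<inter> G0 = G0" using G0H by blast
  finally show ?thesis using sum_ones1 by simp
qed


lemma fix_anti: "H \<subseteq> G \<Longrightarrow> fixring ginv one \<beta> G \<subseteq> fixring ginv one \<beta> H"
  unfolding fixring_def by blast

lemma gamma_sub: assumes HG: "H \<subseteq> G" shows "gammaJ ginv E one \<beta> H \<subseteq> centralizer (fixring ginv one \<beta> H)"
proof
  fix w assume "w \<in> gammaJ ginv E one \<beta> H"
  then obtain f where w: "w = sum f H" and f: "\<And>h. h \<in> H \<Longrightarrow> f h \<in> Jset ginv E one \<beta> h"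
    unfolding gammaJ_def by blast
  show "w \<in> centralizer (fixring ginv one \<beta> H)" unfolding centralizer_def
  proof (intro CollectI ballI)
    fix s assume s: "s \<in> fixring ginv one \<beta> H"
    have "f h * s = s * f h" if hH: "h \<in> H" for h
    proof -
      have h: "h \<in> G" using hH HG by blast
      have fE: "f h \<in> E h" and fJ: "f h * \<beta> h (s * one (ginv h)) = s * f h"
        using f[OF hH] unfolding Jset_def by blast+
      have "\<beta> h (s * one (ginv h)) = s * one h" using s hH unfolding fixring_def by blast
      hence "s * f h = f h * (s * one h)" using fJ by simp
      also have "\<dots> = f h * one h * s" by (simp add: mult.assoc one_central[OF h])
      also have "\<dots> = f h * s" using one_r[OF h fE] by simp
      finally show ?thesis by simp
    qed
    thus "w * s = s * w" unfolding w by (simp add: sum_distrib_left sum_distrib_right)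
  qed
qed

lemma cent_sub: assumes H: "wide_subgroupoid G mult ginv H"
  shows "centralizer (fixring ginv one \<beta> H) \<subseteq> gammaJ ginv E one \<beta> H"
proof
  have HG: "H \<subseteq> G" and Hs: "subgroupoid G mult ginv H" using H unfolding wide_subgroupoid_def subgroupoid_def by blast+
  have finH: "finite H" using HG fin finite_subset by blast
  fix v assume "v \<in> centralizer (fixring ginv one \<beta> H)"
  hence vc: "\<And>s. s \<in> fixring ginv one \<beta> H \<Longrightarrow> v * s = s * v" unfolding centralizer_def by blast
  have trc: "v * tr G a = tr G a * v" for a by (rule vc[OF subsetD[OF fix_anti[OF HG] tr_fix[OF subG]]])
  define f where "f h = (\<Sum>j<m. x j * v * \<beta> h (y j * one (ginv h)))" for h
  have "sum f H = (\<Sum>j<m. x j * v * tr H (y j))"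
    unfolding f_def tr_def by (simp add: sum.swap[of _ H] sum_distrib_left mult.assoc)
  also have "\<dots> = (\<Sum>j<m. x j * tr H (y j) * v)"
  proof (rule sum.cong[OF refl])
    fix j have "v * tr H (y j) = tr H (y j) * v" by (rule vc[OF tr_fix[OF Hs]])
    thus "x j * v * tr H (y j) = x j * tr H (y j) * v" by (simp add: mult.assoc)
  qed
  also have "\<dots> = v" using sumH[OF H] by (simp add: sum_distrib_right[symmetric])
  finally have sf: "sum f H = v" .
  have fJ: "f h \<in> Jset ginv E one \<beta> h" if hH: "h \<in> H" for h
  proof -
    have h: "h \<in> G" using hH HG by blast
    let ?b = "\<lambda>a. \<beta> h (a * one (ginv h))"
    have fE: "f h \<in> E h" unfolding f_def by (rule sum_in[OF h]) (auto intro: lmul_in[OF h] T_in[OF h])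
    have "f h * ?b z = z * f h" for z
    proof -
      have bsplit: "?b (y j * z) = (\<Sum>k<m. tr G (y j * z * x k) * ?b (y k))" for j
      proof -
        have e: "(\<Sum>k<m. tr G (y j * z * x k) * y k) = y j * z" by (rule id2)
        have "y j * z * one (ginv h) = (\<Sum>k<m. tr G (y j * z * x k) * y k) * one (ginv h)"
          by (simp only: e)
        hence "y j * z * one (ginv h) = (\<Sum>k<m. tr G (y j * z * x k) * y k * one (ginv h))"
          by (simp only: sum_distrib_right)
        hence "?b (y j * z) = (\<Sum>k<m. \<beta> h (tr G (y j * z * x k) * y k * one (ginv h)))"
          using beta_sum[OF h, of "{..<m}" "\<lambda>k. tr G (y j * z * x k) * y k * one (ginv h)"]
            mone_in[OF inv_in[OF h]] by simp
        also have "\<dots> = (\<Sum>k<m. tr G (y j * z * x k) * ?b (y k))"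
        proof (rule sum.cong[OF refl])
          fix k
          have "?b (tr G (y j * z * x k)) = tr G (y j * z * x k) * one h"
          proof -
            have "\<forall>h\<in>G. \<beta> h (tr G (y j * z * x k) * one (ginv h)) = tr G (y j * z * x k) * one h"
              using tr_fix[OF subG, of "y j * z * x k"] unfolding fixring_def by simp
            thus ?thesis using h by blast
          qed
          thus "\<beta> h (tr G (y j * z * x k) * y k * one (ginv h)) = tr G (y j * z * x k) * ?b (y k)"
            using beta_mul1[OF h] one_l[OF h T_in[OF h]] by (simp add: mult.assoc)
        qed
        finally show ?thesis .
      qed
      have "f h * ?b z = (\<Sum>j<m. x j * v * ?b (y j * z))"
        unfolding f_def sum_distrib_right
      proof (rule sum.cong[OF refl])
        fix j
        show "x j * v * ?b (y j) * ?b z = x j * v * ?b (y j * z)"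
          using beta_mul1[OF h, of "y j" z] by (simp add: mult.assoc)
      qed
      also have "\<dots> = (\<Sum>j<m. \<Sum>k<m. x j * tr G (y j * (z * x k)) * (v * ?b (y k)))"
      proof (rule sum.cong[OF refl])
        fix j
        have "x j * v * ?b (y j * z) = (\<Sum>k<m. x j * (v * tr G (y j * z * x k)) * ?b (y k))"
          unfolding bsplit by (simp add: sum_distrib_left mult.assoc)
        also have "\<dots> = (\<Sum>k<m. x j * tr G (y j * (z * x k)) * (v * ?b (y k)))"
          by (simp add: trc mult.assoc)
        finally show "x j * v * ?b (y j * z) = (\<Sum>k<m. x j * tr G (y j * (z * x k)) * (v * ?b (y k)))" .
      qed
      also have "\<dots> = (\<Sum>k<m. (\<Sum>j<m. x j * tr G (y j * (z * x k))) * (v * ?b (y k)))"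
        by (subst sum.swap) (simp add: sum_distrib_right)
      also have "\<dots> = (\<Sum>k<m. z * x k * (v * ?b (y k)))" by (simp add: id1)
      also have "\<dots> = z * f h" unfolding f_def by (simp add: sum_distrib_left mult.assoc)
      finally show ?thesis .
    qed
    thus ?thesis using fE unfolding Jset_def by simp
  qed
  show "v \<in> gammaJ ginv E one \<beta> H" unfolding gammaJ_def mem_Collect_eq
    by (rule exI[of _ f]) (use sf fJ in auto)
qed

lemma cent_eq: assumes H: "wide_subgroupoid G mult ginv H"
  shows "centralizer (fixring ginv one \<beta> H) = gammaJ ginv E one \<beta> H"
proof (rule equalityI)
  show "centralizer (fixring ginv one \<beta> H) \<subseteq> gammaJ ginv E one \<beta> H" by (rule cent_sub[OF H])
  have "H \<subseteq> G" using H unfolding wide_subgroupoid_def subgroupoid_def by simp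
  thus "gammaJ ginv E one \<beta> H \<subseteq> centralizer (fixring ginv one \<beta> H)" by (rule gamma_sub)
qed

end

theorem theorem3p9:
  fixes G :: "'g set" and mult :: "'g \<Rightarrow> 'g \<Rightarrow> 'g" and ginv :: "'g \<Rightarrow> 'g"
    and smult :: "'k::comm_ring_1 \<Rightarrow> 'r::ring_1 \<Rightarrow> 'r"
    and E :: "'g \<Rightarrow> 'r set" and one :: "'g \<Rightarrow> 'r" and \<beta> :: "'g \<Rightarrow> 'r \<Rightarrow> 'r"
  assumes "kalgebra smult"
    and "groupoid G mult ginv" and "finite G"
    and "unital_action G mult ginv smult E one \<beta>"
    and "galois_ext G mult ginv one \<beta>"
    and "\<forall>H. wide_subgroupoid G mult ginv H \<longrightarrow>
           centralizer (centralizer (fixring ginv one \<beta> H)) = fixring ginv one \<beta> H"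
  shows "inj_on (fixring ginv one \<beta>) {H. wide_subgroupoid G mult ginv H}
     \<longleftrightarrow> inj_on (gammaJ ginv E one \<beta>) {H. wide_subgroupoid G mult ginv H}"
proof -
  from assms(5) obtain m :: nat and x y :: "nat \<Rightarrow> 'r" where c: "\<forall>g\<in>G. (\<Sum>i<m. x i * \<beta> g (y i * one (ginv g))) =
          (if g \<in> gidents G mult ginv then one g else 0)"
    unfolding galois_ext_def by blast
  interpret gal G mult ginv smult E one \<beta> m x y
    using assms(2,3,4) c by (simp add: gal_def ctx_def gal_axioms_def)
  have e2: "gammaJ ginv E one \<beta> H = centralizer (fixring ginv one \<beta> H)"
    if "wide_subgroupoid G mult ginv H" for H using cent_eq[OF that] by simp
  have e1: "fixring ginv one \<beta> H = centralizer (gammaJ ginv E one \<beta> H)"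
    if "wide_subgroupoid G mult ginv H" for H using e2[OF that] assms(6) that by simp
  show ?thesis
  proof
    assume i: "inj_on (fixring ginv one \<beta>) {H. wide_subgroupoid G mult ginv H}"
    show "inj_on (gammaJ ginv E one \<beta>) {H. wide_subgroupoid G mult ginv H}"
    proof (rule inj_onI)
      fix a b assume a: "a \<in> {H. wide_subgroupoid G mult ginv H}" and b: "b \<in> {H. wide_subgroupoid G mult ginv H}"
        and eq: "gammaJ ginv E one \<beta> a = gammaJ ginv E one \<beta> b"
      have "fixring ginv one \<beta> a = centralizer (gammaJ ginv E one \<beta> a)" using a by (simp add: e1)
      also have "\<dots> = centralizer (gammaJ ginv E one \<beta> b)" using eq by (rule arg_cong)
      also have "\<dots> = fixring ginv one \<beta> b" using b by (simp add: e1)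
      finally have eq2: "fixring ginv one \<beta> a = fixring ginv one \<beta> b" .
      show "a = b" by (rule inj_onD[OF i eq2 a b])
    qed
  next
    assume i: "inj_on (gammaJ ginv E one \<beta>) {H. wide_subgroupoid G mult ginv H}"
    show "inj_on (fixring ginv one \<beta>) {H. wide_subgroupoid G mult ginv H}"
    proof (rule inj_onI)
      fix a b assume a: "a \<in> {H. wide_subgroupoid G mult ginv H}" and b: "b \<in> {H. wide_subgroupoid G mult ginv H}"
        and eq: "fixring ginv one \<beta> a = fixring ginv one \<beta> b"
      have "gammaJ ginv E one \<beta> a = centralizer (fixring ginv one \<beta> a)" using a by (simp add: e2)
      also have "\<dots> = centralizer (fixring ginv one \<beta> b)" using eq by (rule arg_cong)
      also have "\<dots> = gammaJ ginv E one \<beta> b" using b by (simp add: e2)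
      finally have eq2: "gammaJ ginv E one \<beta> a = gammaJ ginv E one \<beta> b" .
      show "a = b" by (rule inj_onD[OF i eq2 a b])
    qed
  qed
qed

end
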